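(* Let $n\ge 3$ be odd and $k\ge 3$. Then every Jenga-like configuration $Q$ of the $(n,k)$-game satisfies $$ g(Q)\le \frac{n(n-1)(k-2)}{2}. $$
   Context: The $(n,k)$-game is played with $nk$ blocks, each a box of length $n$, width $1$, height $1$. Level $i$ occupies heights $[i-1,i]$ and has $n$ slots $j=1,\dots,n$; a block in slot $j$ of an odd level $i$ is $[0,n]\times[j-1,j]\times[i-1,i]$, and of an even level $i$ is $[j-1,j]\times[0,n]\times[i-1,i]$. The initial configuration has $k$ full levels. A move removes exactly one block from a level which is not the topmost level and, when the topmost level is incomplete (fewer than $n$ blocks), is not the level immediately below the topmost level, and places it in an empty slot of the topmost level if that level is incomplete, or in a slot of a new level on top otherwise. A Jenga-like configuration is one obtainable from the initial configuration by finitely many moves in which every level up to the topmost contains at least one block. $g(Q)$ is the genus of the boundary surface of the union of the blocks of $Q$ (a connected closed polyhedral surface). *)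

theory Defs
  imports Complex_Main
begin

type_synonym config = "nat set list"
  (* level i (1-based) is element i-1 of the list; a level is the set of occupied slots, a subset of {1..n} *)

definition initial_config :: "nat \<Rightarrow> nat \<Rightarrow> config" where
  "initial_config n k = replicate k {1..n}"

definition jenga_move :: "nat \<Rightarrow> config \<Rightarrow> config \<Rightarrow> bool" where
  "jenga_move n Q Q' \<longleftrightarrow>
     (\<exists>i j. i + 1 < length Q
        \<and> (card (last Q) < n \<longrightarrow> i + 2 \<noteq> length Q)
        \<and> j \<in> Q ! i
        \<and> (let R = Q[i := Q ! i - {j}] in
            (if card (last Q) < n
             then (\<exists>s \<in> {1..n} - last Q. Q' = butlast R @ [insert s (last Q)])
             else (\<exists>s \<in> {1..n}. Q' = R @ [{s}]))))"

definition jenga_like :: "nat \<Rightarrow> nat \<Rightarrow> config \<Rightarrow> bool" where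
  "jenga_like n k Q \<longleftrightarrow> (jenga_move n)\<^sup>*\<^sup>* (initial_config n k) Q \<and> (\<forall>L \<in> set Q. L \<noteq> {})"

type_synonym pt = "int \<times> int \<times> int"

(* unit cubes [x,x+1]x[y,y+1]x[z,z+1] indexed by their minimal corner (x,y,z) *)
definition config_cubes :: "nat \<Rightarrow> config \<Rightarrow> pt set" where
  "config_cubes n Q =
     {(int x, int j - 1, int i) | i j x. i < length Q \<and> even i \<and> j \<in> Q ! i \<and> x < n}
   \<union> {(int j - 1, int y, int i) | i j y. i < length Q \<and> odd i \<and> j \<in> Q ! i \<and> y < n}"

fun padd :: "pt \<Rightarrow> pt \<Rightarrow> pt" where
  "padd (a, b, c) (x, y, z) = (a + x, b + y, c + z)"

fun psub :: "pt \<Rightarrow> pt \<Rightarrow> pt" where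
  "psub (a, b, c) (x, y, z) = (a - x, b - y, c - z)"

definition unitv :: "nat \<Rightarrow> pt" where
  "unitv d = (if d = 0 then (1, 0, 0) else if d = 1 then (0, 1, 0) else (0, 0, 1))"

definition ax1 :: "nat \<Rightarrow> nat" where "ax1 d = (d + 1) mod 3"
definition ax2 :: "nat \<Rightarrow> nat" where "ax2 d = (d + 2) mod 3"

(* unit square (d,p): perpendicular to axis d, minimal corner p;
   unit segment (d,p): parallel to axis d, from p to p + e_d *)
definition boundary_faces :: "pt set \<Rightarrow> (nat \<times> pt) set" where
  "boundary_faces C = {(d, p). d < 3 \<and> ((p \<in> C) \<noteq> (psub p (unitv d) \<in> C))}"

definition face_edges :: "nat \<times> pt \<Rightarrow> (nat \<times> pt) set" where
  "face_edges f = (case f of (d, p) \<Rightarrow>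
     {(ax1 d, p), (ax1 d, padd p (unitv (ax2 d))), (ax2 d, p), (ax2 d, padd p (unitv (ax1 d)))})"

definition face_vertices :: "nat \<times> pt \<Rightarrow> pt set" where
  "face_vertices f = (case f of (d, p) \<Rightarrow>
     {p, padd p (unitv (ax1 d)), padd p (unitv (ax2 d)), padd (padd p (unitv (ax1 d))) (unitv (ax2 d))})"

definition boundary_edges :: "pt set \<Rightarrow> (nat \<times> pt) set" where
  "boundary_edges C = (\<Union>f \<in> boundary_faces C. face_edges f)"

definition boundary_vertices :: "pt set \<Rightarrow> pt set" where
  "boundary_vertices C = (\<Union>f \<in> boundary_faces C. face_vertices f)"

definition boundary_euler :: "pt set \<Rightarrow> int" where
  "boundary_euler C = int (card (boundary_vertices C)) - int (card (boundary_edges C))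
                      + int (card (boundary_faces C))"

(* genus of a closed connected orientable surface: chi = 2 - 2g *)
definition genus :: "nat \<Rightarrow> config \<Rightarrow> real" where
  "genus n Q = (2 - real_of_int (boundary_euler (config_cubes n Q))) / 2"

end

theory Submission
  imports Defs
begin


type_synonym cell1 = "bool \<times> int"
type_synonym cell3 = "cell1 \<times> cell1 \<times> cell1"

definition st1 :: "cell1 \<Rightarrow> int set" where
  "st1 c = (if fst c then {snd c} else {snd c - 1, snd c})"
definition sg1 :: "cell1 \<Rightarrow> int" where
  "sg1 c = (if fst c then -1 else 1)"
definition st3 :: "cell3 \<Rightarrow> pt set" where
  "st3 c = (case c of (a, b, e) \<Rightarrow> st1 a \<times> st1 b \<times> st1 e)"
definition sg3 :: "cell3 \<Rightarrow> int" where
  "sg3 c = (case c of (a, b, e) \<Rightarrow> sg1 a * sg1 b * sg1 e)"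
definition ex3 :: "pt set \<Rightarrow> cell3 \<Rightarrow> bool" where
  "ex3 C c = (\<exists>q\<in>st3 c. q \<in> C)"
definition al3 :: "pt set \<Rightarrow> cell3 \<Rightarrow> bool" where
  "al3 C c = (\<forall>q\<in>st3 c. q \<in> C)"
definition bd3 :: "pt set \<Rightarrow> cell3 \<Rightarrow> bool" where
  "bd3 C c = (ex3 C c \<and> \<not> al3 C c)"

definition cellF :: "nat \<times> pt \<Rightarrow> cell3" where
  "cellF f = (case f of (d, (x, y, z)) \<Rightarrow> ((d \<noteq> 0, x), (d \<noteq> 1, y), (d \<noteq> 2, z)))"
definition cellE :: "nat \<times> pt \<Rightarrow> cell3" where
  "cellE f = (case f of (d, (x, y, z)) \<Rightarrow> ((d = 0, x), (d = 1, y), (d = 2, z)))"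
definition cellV :: "pt \<Rightarrow> cell3" where
  "cellV p = (case p of (x, y, z) \<Rightarrow> ((False, x), (False, y), (False, z)))"


lemma ax_simps[simp]: "ax1 0 = 1" "ax1 1 = 2" "ax1 2 = 0" "ax2 0 = 2" "ax2 1 = 0" "ax2 2 = 1" "ax1 (Suc 0) = 2" "ax2 (Suc 0) = 0"
  by (simp_all add: ax1_def ax2_def)
lemma unitv_simps[simp]: "unitv 0 = (1,0,0)" "unitv 1 = (0,1,0)" "unitv 2 = (0,0,1)" "unitv (Suc 0) = (0,1,0)"
  by (simp_all add: unitv_def)



lemma be0: "(0::nat, (x,y,z)) \<in> boundary_edges C \<longleftrightarrow> (1::nat, (x,y,z)) \<in> boundary_faces C \<or> (1::nat, (x,y,z-1)) \<in> boundary_faces C \<or> (2::nat, (x,y,z)) \<in> boundary_faces C \<or> (2::nat, (x,y-1,z)) \<in> boundary_faces C"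
proof
  assume "(0::nat, (x,y,z)) \<in> boundary_edges C"
  then obtain d a b c where f: "(d,(a,b,c)) \<in> boundary_faces C" "(0::nat, (x,y,z)) \<in> face_edges (d,(a,b,c))"
    unfolding boundary_edges_def by auto
  have "d < 3" using f(1) unfolding boundary_faces_def by auto
  then have "d = 0 \<or> d = 1 \<or> d = 2" by auto
  then show "(1::nat, (x,y,z)) \<in> boundary_faces C \<or> (1::nat, (x,y,z-1)) \<in> boundary_faces C \<or> (2::nat, (x,y,z)) \<in> boundary_faces C \<or> (2::nat, (x,y-1,z)) \<in> boundary_faces C"
    using f unfolding face_edges_def by (elim disjE) auto
next
  assume "(1::nat, (x,y,z)) \<in> boundary_faces C \<or> (1::nat, (x,y,z-1)) \<in> boundary_faces C \<or> (2::nat, (x,y,z)) \<in> boundary_faces C \<or> (2::nat, (x,y-1,z)) \<in> boundary_faces C"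
  then show "(0::nat, (x,y,z)) \<in> boundary_edges C"
    unfolding boundary_edges_def
  proof (elim disjE)
    assume h: "(1::nat, (x,y,z)) \<in> boundary_faces C"
    show "(0::nat, x, y, z) \<in> \<Union> (face_edges ` boundary_faces C)"
      by (rule UN_I[OF h]) (simp add: face_edges_def)
  next
    assume h: "(1::nat, (x,y,z-1)) \<in> boundary_faces C"
    show "(0::nat, x, y, z) \<in> \<Union> (face_edges ` boundary_faces C)"
      by (rule UN_I[OF h]) (simp add: face_edges_def)
  next
    assume h: "(2::nat, (x,y,z)) \<in> boundary_faces C"
    show "(0::nat, x, y, z) \<in> \<Union> (face_edges ` boundary_faces C)"
      by (rule UN_I[OF h]) (simp add: face_edges_def)
  next
    assume h: "(2::nat, (x,y-1,z)) \<in> boundary_faces C"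
    show "(0::nat, x, y, z) \<in> \<Union> (face_edges ` boundary_faces C)"
      by (rule UN_I[OF h]) (simp add: face_edges_def)
  qed
qed

lemma be1: "(1::nat, (x,y,z)) \<in> boundary_edges C \<longleftrightarrow> (2::nat, (x,y,z)) \<in> boundary_faces C \<or> (2::nat, (x-1,y,z)) \<in> boundary_faces C \<or> (0::nat, (x,y,z)) \<in> boundary_faces C \<or> (0::nat, (x,y,z-1)) \<in> boundary_faces C"
proof
  assume "(1::nat, (x,y,z)) \<in> boundary_edges C"
  then obtain d a b c where f: "(d,(a,b,c)) \<in> boundary_faces C" "(1::nat, (x,y,z)) \<in> face_edges (d,(a,b,c))"
    unfolding boundary_edges_def by auto
  have "d < 3" using f(1) unfolding boundary_faces_def by auto
  then have "d = 0 \<or> d = 1 \<or> d = 2" by auto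
  then show "(2::nat, (x,y,z)) \<in> boundary_faces C \<or> (2::nat, (x-1,y,z)) \<in> boundary_faces C \<or> (0::nat, (x,y,z)) \<in> boundary_faces C \<or> (0::nat, (x,y,z-1)) \<in> boundary_faces C"
    using f unfolding face_edges_def by (elim disjE) auto
next
  assume "(2::nat, (x,y,z)) \<in> boundary_faces C \<or> (2::nat, (x-1,y,z)) \<in> boundary_faces C \<or> (0::nat, (x,y,z)) \<in> boundary_faces C \<or> (0::nat, (x,y,z-1)) \<in> boundary_faces C"
  then show "(1::nat, (x,y,z)) \<in> boundary_edges C"
    unfolding boundary_edges_def
  proof (elim disjE)
    assume h: "(2::nat, (x,y,z)) \<in> boundary_faces C"
    show "(1::nat, x, y, z) \<in> \<Union> (face_edges ` boundary_faces C)"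
      by (rule UN_I[OF h]) (simp add: face_edges_def)
  next
    assume h: "(2::nat, (x-1,y,z)) \<in> boundary_faces C"
    show "(1::nat, x, y, z) \<in> \<Union> (face_edges ` boundary_faces C)"
      by (rule UN_I[OF h]) (simp add: face_edges_def)
  next
    assume h: "(0::nat, (x,y,z)) \<in> boundary_faces C"
    show "(1::nat, x, y, z) \<in> \<Union> (face_edges ` boundary_faces C)"
      by (rule UN_I[OF h]) (simp add: face_edges_def)
  next
    assume h: "(0::nat, (x,y,z-1)) \<in> boundary_faces C"
    show "(1::nat, x, y, z) \<in> \<Union> (face_edges ` boundary_faces C)"
      by (rule UN_I[OF h]) (simp add: face_edges_def)
  qed
qed

lemma be2: "(2::nat, (x,y,z)) \<in> boundary_edges C \<longleftrightarrow> (0::nat, (x,y,z)) \<in> boundary_faces C \<or> (0::nat, (x,y-1,z)) \<in> boundary_faces C \<or> (1::nat, (x,y,z)) \<in> boundary_faces C \<or> (1::nat, (x-1,y,z)) \<in> boundary_faces C"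
proof
  assume "(2::nat, (x,y,z)) \<in> boundary_edges C"
  then obtain d a b c where f: "(d,(a,b,c)) \<in> boundary_faces C" "(2::nat, (x,y,z)) \<in> face_edges (d,(a,b,c))"
    unfolding boundary_edges_def by auto
  have "d < 3" using f(1) unfolding boundary_faces_def by auto
  then have "d = 0 \<or> d = 1 \<or> d = 2" by auto
  then show "(0::nat, (x,y,z)) \<in> boundary_faces C \<or> (0::nat, (x,y-1,z)) \<in> boundary_faces C \<or> (1::nat, (x,y,z)) \<in> boundary_faces C \<or> (1::nat, (x-1,y,z)) \<in> boundary_faces C"
    using f unfolding face_edges_def by (elim disjE) auto
next
  assume "(0::nat, (x,y,z)) \<in> boundary_faces C \<or> (0::nat, (x,y-1,z)) \<in> boundary_faces C \<or> (1::nat, (x,y,z)) \<in> boundary_faces C \<or> (1::nat, (x-1,y,z)) \<in> boundary_faces C"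
  then show "(2::nat, (x,y,z)) \<in> boundary_edges C"
    unfolding boundary_edges_def
  proof (elim disjE)
    assume h: "(0::nat, (x,y,z)) \<in> boundary_faces C"
    show "(2::nat, x, y, z) \<in> \<Union> (face_edges ` boundary_faces C)"
      by (rule UN_I[OF h]) (simp add: face_edges_def)
  next
    assume h: "(0::nat, (x,y-1,z)) \<in> boundary_faces C"
    show "(2::nat, x, y, z) \<in> \<Union> (face_edges ` boundary_faces C)"
      by (rule UN_I[OF h]) (simp add: face_edges_def)
  next
    assume h: "(1::nat, (x,y,z)) \<in> boundary_faces C"
    show "(2::nat, x, y, z) \<in> \<Union> (face_edges ` boundary_faces C)"
      by (rule UN_I[OF h]) (simp add: face_edges_def)
  next
    assume h: "(1::nat, (x-1,y,z)) \<in> boundary_faces C"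
    show "(2::nat, x, y, z) \<in> \<Union> (face_edges ` boundary_faces C)"
      by (rule UN_I[OF h]) (simp add: face_edges_def)
  qed
qed

lemma bv_iff: "(x,y,z) \<in> boundary_vertices C \<longleftrightarrow> (0::nat, (x,y,z)) \<in> boundary_faces C \<or> (0::nat, (x,y-1,z)) \<in> boundary_faces C \<or> (0::nat, (x,y,z-1)) \<in> boundary_faces C \<or> (0::nat, (x,y-1,z-1)) \<in> boundary_faces C \<or> (1::nat, (x,y,z)) \<in> boundary_faces C \<or> (1::nat, (x,y,z-1)) \<in> boundary_faces C \<or> (1::nat, (x-1,y,z)) \<in> boundary_faces C \<or> (1::nat, (x-1,y,z-1)) \<in> boundary_faces C \<or> (2::nat, (x,y,z)) \<in> boundary_faces C \<or> (2::nat, (x-1,y,z)) \<in> boundary_faces C \<or> (2::nat, (x,y-1,z)) \<in> boundary_faces C \<or> (2::nat, (x-1,y-1,z)) \<in> boundary_faces C"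
proof
  assume "(x,y,z) \<in> boundary_vertices C"
  then obtain d a b c where f: "(d,(a,b,c)) \<in> boundary_faces C" "(x,y,z) \<in> face_vertices (d,(a,b,c))"
    unfolding boundary_vertices_def by auto
  have "d < 3" using f(1) unfolding boundary_faces_def by auto
  then have "d = 0 \<or> d = 1 \<or> d = 2" by auto
  then show "(0::nat, (x,y,z)) \<in> boundary_faces C \<or> (0::nat, (x,y-1,z)) \<in> boundary_faces C \<or> (0::nat, (x,y,z-1)) \<in> boundary_faces C \<or> (0::nat, (x,y-1,z-1)) \<in> boundary_faces C \<or> (1::nat, (x,y,z)) \<in> boundary_faces C \<or> (1::nat, (x,y,z-1)) \<in> boundary_faces C \<or> (1::nat, (x-1,y,z)) \<in> boundary_faces C \<or> (1::nat, (x-1,y,z-1)) \<in> boundary_faces C \<or> (2::nat, (x,y,z)) \<in> boundary_faces C \<or> (2::nat, (x-1,y,z)) \<in> boundary_faces C \<or> (2::nat, (x,y-1,z)) \<in> boundary_faces C \<or> (2::nat, (x-1,y-1,z)) \<in> boundary_faces C"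
    using f unfolding face_vertices_def by (elim disjE) auto
next
  assume "(0::nat, (x,y,z)) \<in> boundary_faces C \<or> (0::nat, (x,y-1,z)) \<in> boundary_faces C \<or> (0::nat, (x,y,z-1)) \<in> boundary_faces C \<or> (0::nat, (x,y-1,z-1)) \<in> boundary_faces C \<or> (1::nat, (x,y,z)) \<in> boundary_faces C \<or> (1::nat, (x,y,z-1)) \<in> boundary_faces C \<or> (1::nat, (x-1,y,z)) \<in> boundary_faces C \<or> (1::nat, (x-1,y,z-1)) \<in> boundary_faces C \<or> (2::nat, (x,y,z)) \<in> boundary_faces C \<or> (2::nat, (x-1,y,z)) \<in> boundary_faces C \<or> (2::nat, (x,y-1,z)) \<in> boundary_faces C \<or> (2::nat, (x-1,y-1,z)) \<in> boundary_faces C"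
  then show "(x,y,z) \<in> boundary_vertices C"
    unfolding boundary_vertices_def
  proof (elim disjE)
    assume h: "(0::nat, (x,y,z)) \<in> boundary_faces C"
    show "(x, y, z) \<in> \<Union> (face_vertices ` boundary_faces C)"
      by (rule UN_I[OF h]) (simp add: face_vertices_def)
  next
    assume h: "(0::nat, (x,y-1,z)) \<in> boundary_faces C"
    show "(x, y, z) \<in> \<Union> (face_vertices ` boundary_faces C)"
      by (rule UN_I[OF h]) (simp add: face_vertices_def)
  next
    assume h: "(0::nat, (x,y,z-1)) \<in> boundary_faces C"
    show "(x, y, z) \<in> \<Union> (face_vertices ` boundary_faces C)"
      by (rule UN_I[OF h]) (simp add: face_vertices_def)
  next
    assume h: "(0::nat, (x,y-1,z-1)) \<in> boundary_faces C"
    show "(x, y, z) \<in> \<Union> (face_vertices ` boundary_faces C)"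
      by (rule UN_I[OF h]) (simp add: face_vertices_def)
  next
    assume h: "(1::nat, (x,y,z)) \<in> boundary_faces C"
    show "(x, y, z) \<in> \<Union> (face_vertices ` boundary_faces C)"
      by (rule UN_I[OF h]) (simp add: face_vertices_def)
  next
    assume h: "(1::nat, (x,y,z-1)) \<in> boundary_faces C"
    show "(x, y, z) \<in> \<Union> (face_vertices ` boundary_faces C)"
      by (rule UN_I[OF h]) (simp add: face_vertices_def)
  next
    assume h: "(1::nat, (x-1,y,z)) \<in> boundary_faces C"
    show "(x, y, z) \<in> \<Union> (face_vertices ` boundary_faces C)"
      by (rule UN_I[OF h]) (simp add: face_vertices_def)
  next
    assume h: "(1::nat, (x-1,y,z-1)) \<in> boundary_faces C"
    show "(x, y, z) \<in> \<Union> (face_vertices ` boundary_faces C)"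
      by (rule UN_I[OF h]) (simp add: face_vertices_def)
  next
    assume h: "(2::nat, (x,y,z)) \<in> boundary_faces C"
    show "(x, y, z) \<in> \<Union> (face_vertices ` boundary_faces C)"
      by (rule UN_I[OF h]) (simp add: face_vertices_def)
  next
    assume h: "(2::nat, (x-1,y,z)) \<in> boundary_faces C"
    show "(x, y, z) \<in> \<Union> (face_vertices ` boundary_faces C)"
      by (rule UN_I[OF h]) (simp add: face_vertices_def)
  next
    assume h: "(2::nat, (x,y-1,z)) \<in> boundary_faces C"
    show "(x, y, z) \<in> \<Union> (face_vertices ` boundary_faces C)"
      by (rule UN_I[OF h]) (simp add: face_vertices_def)
  next
    assume h: "(2::nat, (x-1,y-1,z)) \<in> boundary_faces C"
    show "(x, y, z) \<in> \<Union> (face_vertices ` boundary_faces C)"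
      by (rule UN_I[OF h]) (simp add: face_vertices_def)
  qed
qed


lemma bd3_F: "bd3 C ((False,x),(True,y),(True,z)) \<longleftrightarrow> ((x,y,z) \<in> C) \<noteq> ((x-1,y,z) \<in> C)"
  by (auto simp: bd3_def ex3_def al3_def st3_def st1_def)

lemma bf_simp: "(d, (x,y,z)) \<in> boundary_faces C \<longleftrightarrow> d < 3 \<and> (((x,y,z) \<in> C) \<noteq> (psub (x,y,z) (unitv d) \<in> C))"
  unfolding boundary_faces_def by auto

lemma be_char: "(d,(x,y,z)) \<in> boundary_edges C \<longleftrightarrow> d < 3 \<and> bd3 C (cellE (d,(x,y,z)))"
proof (cases "d < 3")
  case True
  then have "d = 0 \<or> d = 1 \<or> d = 2" by auto
  then show ?thesis
    by (elim disjE) (simp_all only: be0 be1 be2, auto simp: bf_simp bd3_def ex3_def al3_def st3_def st1_def cellE_def)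
next
  case False
  have "(d,(x,y,z)) \<notin> boundary_edges C"
  proof
    assume "(d,(x,y,z)) \<in> boundary_edges C"
    then obtain f where "f \<in> boundary_faces C" "(d,(x,y,z)) \<in> face_edges f"
      unfolding boundary_edges_def by auto
    then show False using False unfolding face_edges_def ax1_def ax2_def by (auto split: prod.splits)
  qed
  then show ?thesis using False by simp
qed

lemma bv_char: "(x,y,z) \<in> boundary_vertices C \<longleftrightarrow> bd3 C (cellV (x,y,z))"
  by (simp only: bv_iff, auto simp: bf_simp bd3_def ex3_def al3_def st3_def st1_def cellV_def)

lemma bf_char: "(d,(x,y,z)) \<in> boundary_faces C \<longleftrightarrow> d < 3 \<and> bd3 C (cellF (d,(x,y,z)))"
proof (cases "d < 3")
  case True
  then have "d = 0 \<or> d = 1 \<or> d = 2" by auto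
  then show ?thesis
    by (elim disjE) (auto simp: bf_simp bd3_def ex3_def al3_def st3_def st1_def cellF_def)
qed (simp add: bf_simp)


definition B1 :: "int \<Rightarrow> int \<Rightarrow> cell1 set" where "B1 lo hi = (UNIV::bool set) \<times> {lo..hi}"
definition B3 :: "int \<Rightarrow> int \<Rightarrow> cell3 set" where "B3 lo hi = B1 lo hi \<times> B1 lo hi \<times> B1 lo hi"
definition nint :: "cell3 \<Rightarrow> nat" where
  "nint c = (case c of (a,b,e) \<Rightarrow> of_bool (fst a) + of_bool (fst b) + of_bool (fst e))"
definition inbox :: "int \<Rightarrow> int \<Rightarrow> pt set \<Rightarrow> bool" where
  "inbox lo hi C = (\<forall>x y z. (x,y,z) \<in> C \<longrightarrow> lo < x \<and> x < hi \<and> lo < y \<and> y < hi \<and> lo < z \<and> z < hi)"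

lemma finite_B3: "finite (B3 lo hi)"
  unfolding B3_def B1_def by auto

lemma bd_in_box:
  assumes "inbox lo hi C" "bd3 C c"
  shows "c \<in> B3 lo hi"
proof -
  obtain a u b v e w where c: "c = ((a,u),(b,v),(e,w))" by (cases c) auto
  from assms(2) obtain x y z where q: "(x,y,z) \<in> st3 c" "(x,y,z) \<in> C"
    unfolding bd3_def ex3_def by auto
  have h: "lo < x \<and> x < hi \<and> lo < y \<and> y < hi \<and> lo < z \<and> z < hi" using assms(1) q(2) unfolding inbox_def by blast
  show ?thesis using q(1) h unfolding c B3_def B1_def st3_def st1_def
    by (auto split: if_splits)
qed

lemma cardF:
  assumes "inbox lo hi C"
  shows "card (boundary_faces C) = card {c \<in> B3 lo hi. nint c = 2 \<and> bd3 C c}"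
proof -
  have inj: "inj_on cellF (boundary_faces C)"
  proof (rule inj_onI)
    fix f g assume "f \<in> boundary_faces C" "g \<in> boundary_faces C" "cellF f = cellF g"
    moreover obtain d x y z where "f = (d,(x,y,z))" by (cases f) auto
    moreover obtain d' x' y' z' where "g = (d',(x',y',z'))" by (cases g) auto
    ultimately show "f = g" unfolding cellF_def boundary_faces_def
      by (cases "d = 0"; cases "d = 1"; cases "d' = 0"; cases "d' = 1") auto
  qed
  have img: "cellF ` boundary_faces C = {c \<in> B3 lo hi. nint c = 2 \<and> bd3 C c}"
  proof
    show "cellF ` boundary_faces C \<subseteq> {c \<in> B3 lo hi. nint c = 2 \<and> bd3 C c}"
    proof
      fix c assume "c \<in> cellF ` boundary_faces C"
      then obtain d x y z where f: "(d,(x,y,z)) \<in> boundary_faces C" "c = cellF (d,(x,y,z))" by auto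
      then have "d < 3" "bd3 C c" using bf_char by auto
      moreover have "nint c = 2" using \<open>d < 3\<close> f(2) unfolding cellF_def nint_def
        by (cases "d = 0"; cases "d = 1") auto
      ultimately show "c \<in> {c \<in> B3 lo hi. nint c = 2 \<and> bd3 C c}" using bd_in_box[OF assms] by auto
    qed
  next
    show "{c \<in> B3 lo hi. nint c = 2 \<and> bd3 C c} \<subseteq> cellF ` boundary_faces C"
    proof
      fix c assume c: "c \<in> {c \<in> B3 lo hi. nint c = 2 \<and> bd3 C c}"
      obtain a x b y e z where cc: "c = ((a,x),(b,y),(e,z))" by (cases c) auto
      have "\<exists>d<3. c = cellF (d,(x,y,z))"
        using c unfolding cc nint_def cellF_def
        by (cases a; cases b; cases e) auto
      then obtain d where "d < 3" "c = cellF (d,(x,y,z))" by auto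
      then show "c \<in> cellF ` boundary_faces C" using c bf_char by auto
    qed
  qed
  show ?thesis using card_image[OF inj] img by simp
qed

lemma cardE:
  assumes "inbox lo hi C"
  shows "card (boundary_edges C) = card {c \<in> B3 lo hi. nint c = 1 \<and> bd3 C c}"
proof -
  have inj: "inj_on cellE (boundary_edges C)"
  proof (rule inj_onI)
    fix f g assume fg: "f \<in> boundary_edges C" "g \<in> boundary_edges C" "cellE f = cellE g"
    obtain d x y z where f: "f = (d,(x,y,z))" by (cases f) auto
    obtain d' x' y' z' where g: "g = (d',(x',y',z'))" by (cases g) auto
    have "d < 3" "d' < 3" using fg be_char f g by auto
    then show "f = g" using fg(3) unfolding f g cellE_def
      by (cases "d = 0"; cases "d = 1"; cases "d' = 0"; cases "d' = 1") auto
  qed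
  have img: "cellE ` boundary_edges C = {c \<in> B3 lo hi. nint c = 1 \<and> bd3 C c}"
  proof
    show "cellE ` boundary_edges C \<subseteq> {c \<in> B3 lo hi. nint c = 1 \<and> bd3 C c}"
    proof
      fix c assume "c \<in> cellE ` boundary_edges C"
      then obtain d x y z where f: "(d,(x,y,z)) \<in> boundary_edges C" "c = cellE (d,(x,y,z))" by auto
      then have "d < 3" "bd3 C c" using be_char by auto
      moreover have "nint c = 1" using \<open>d < 3\<close> f(2) unfolding cellE_def nint_def
        by (cases "d = 0"; cases "d = 1") auto
      ultimately show "c \<in> {c \<in> B3 lo hi. nint c = 1 \<and> bd3 C c}" using bd_in_box[OF assms] by auto
    qed
  next
    show "{c \<in> B3 lo hi. nint c = 1 \<and> bd3 C c} \<subseteq> cellE ` boundary_edges C"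
    proof
      fix c assume c: "c \<in> {c \<in> B3 lo hi. nint c = 1 \<and> bd3 C c}"
      obtain a x b y e z where cc: "c = ((a,x),(b,y),(e,z))" by (cases c) auto
      have "\<exists>d<3. c = cellE (d,(x,y,z))"
        using c unfolding cc nint_def cellE_def
        by (cases a; cases b; cases e) auto
      then obtain d where "d < 3" "c = cellE (d,(x,y,z))" by auto
      then show "c \<in> cellE ` boundary_edges C" using c be_char by auto
    qed
  qed
  show ?thesis using card_image[OF inj] img by simp
qed

lemma cardV:
  assumes "inbox lo hi C"
  shows "card (boundary_vertices C) = card {c \<in> B3 lo hi. nint c = 0 \<and> bd3 C c}"
proof -
  have inj: "inj_on cellV (boundary_vertices C)"
    by (rule inj_onI) (auto simp: cellV_def split: prod.splits)
  have img: "cellV ` boundary_vertices C = {c \<in> B3 lo hi. nint c = 0 \<and> bd3 C c}"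
  proof
    show "cellV ` boundary_vertices C \<subseteq> {c \<in> B3 lo hi. nint c = 0 \<and> bd3 C c}"
    proof
      fix c assume "c \<in> cellV ` boundary_vertices C"
      then obtain x y z where f: "(x,y,z) \<in> boundary_vertices C" "c = cellV (x,y,z)" by auto
      then have "bd3 C c" using bv_char by auto
      moreover have "nint c = 0" using f(2) unfolding cellV_def nint_def by auto
      ultimately show "c \<in> {c \<in> B3 lo hi. nint c = 0 \<and> bd3 C c}" using bd_in_box[OF assms] by auto
    qed
  next
    show "{c \<in> B3 lo hi. nint c = 0 \<and> bd3 C c} \<subseteq> cellV ` boundary_vertices C"
    proof
      fix c assume c: "c \<in> {c \<in> B3 lo hi. nint c = 0 \<and> bd3 C c}"
      obtain a x b y e z where cc: "c = ((a,x),(b,y),(e,z))" by (cases c) auto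
      have "c = cellV (x,y,z)"
        using c unfolding cc nint_def cellV_def
        by (cases a; cases b; cases e) auto
      then show "c \<in> cellV ` boundary_vertices C" using c bv_char by auto
    qed
  qed
  show ?thesis using card_image[OF inj] img by simp
qed


lemma pw_sg:
  "sg3 c * (of_bool (ex3 C c) - of_bool (al3 C c)) =
   (of_bool (nint c = 0 \<and> bd3 C c) - of_bool (nint c = 1 \<and> bd3 C c) + of_bool (nint c = 2 \<and> bd3 C c) :: int)"
proof -
  obtain a x b y e z where cc: "c = ((a,x),(b,y),(e,z))" by (cases c) auto
  have ae: "al3 C c \<Longrightarrow> ex3 C c" unfolding al3_def ex3_def cc st3_def st1_def by auto
  show ?thesis
  proof (cases "a \<and> b \<and> e")
    case True
    then have "ex3 C c = al3 C c" unfolding al3_def ex3_def cc st3_def st1_def by auto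
    then show ?thesis using True unfolding cc nint_def sg3_def sg1_def bd3_def by auto
  next
    case False
    then show ?thesis using ae unfolding cc nint_def sg3_def sg1_def bd3_def
      by (cases a; cases b; cases e) auto
  qed
qed

lemma euler_sum:
  assumes "inbox lo hi C"
  shows "boundary_euler C = (\<Sum>c\<in>B3 lo hi. sg3 c * (of_bool (ex3 C c) - of_bool (al3 C c)))"
proof -
  have "(\<Sum>c\<in>B3 lo hi. sg3 c * (of_bool (ex3 C c) - of_bool (al3 C c))) =
        (\<Sum>c\<in>B3 lo hi. (of_bool (nint c = 0 \<and> bd3 C c) - of_bool (nint c = 1 \<and> bd3 C c) + of_bool (nint c = 2 \<and> bd3 C c) :: int))"
    by (simp only: pw_sg)
  also have "\<dots> = int (card {c \<in> B3 lo hi. nint c = 0 \<and> bd3 C c}) - int (card {c \<in> B3 lo hi. nint c = 1 \<and> bd3 C c})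
      + int (card {c \<in> B3 lo hi. nint c = 2 \<and> bd3 C c})"
  proof -
    have e: "\<And>P. (\<Sum>c\<in>B3 lo hi. (of_bool (P c) :: int)) = int (card {c \<in> B3 lo hi. P c})"
    proof -
      fix P :: "cell3 \<Rightarrow> bool"
      have "(\<Sum>c\<in>B3 lo hi. (of_bool (P c) :: int)) = of_nat (card (B3 lo hi \<inter> {c. P c}))"
        by (rule sum_of_bool_eq[OF finite_B3 finite_B3])
      moreover have "B3 lo hi \<inter> {c. P c} = {c \<in> B3 lo hi. P c}" by blast
      ultimately show "(\<Sum>c\<in>B3 lo hi. (of_bool (P c) :: int)) = int (card {c \<in> B3 lo hi. P c})" by simp
    qed
    show ?thesis by (simp only: sum.distrib sum_subtractf e)
  qed
  finally show ?thesis unfolding boundary_euler_def cardF[OF assms] cardE[OF assms] cardV[OF assms] by simp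
qed


definition runs :: "int set \<Rightarrow> nat" where "runs S = card {t \<in> S. t - 1 \<notin> S}"
definition e1 :: "int \<Rightarrow> int \<Rightarrow> int set \<Rightarrow> int" where
  "e1 lo hi S = (\<Sum>c\<in>B1 lo hi. sg1 c * of_bool (\<exists>s\<in>st1 c. s \<in> S))"
definition a1 :: "int \<Rightarrow> int \<Rightarrow> int set \<Rightarrow> int" where
  "a1 lo hi S = (\<Sum>c\<in>B1 lo hi. sg1 c * of_bool (\<forall>s\<in>st1 c. s \<in> S))"

lemma sumB1: "(\<Sum>c\<in>B1 lo hi. f c) = (\<Sum>t\<in>{lo..hi}. f (True, t)) + (\<Sum>t\<in>{lo..hi}. f (False, t))"
proof -
  have "(\<Sum>c\<in>B1 lo hi. f c) = (\<Sum>b\<in>(UNIV::bool set). \<Sum>t\<in>{lo..hi}. f (b, t))"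
    unfolding B1_def by (simp add: sum.cartesian_product)
  also have "\<dots> = (\<Sum>t\<in>{lo..hi}. f (True, t)) + (\<Sum>t\<in>{lo..hi}. f (False, t))"
    by (simp add: UNIV_bool add.commute)
  finally show ?thesis .
qed

lemma sum_bool_card: "finite T \<Longrightarrow> (\<Sum>t\<in>T. (of_bool (P t) :: int)) = int (card {t \<in> T. P t})"
proof -
  assume f: "finite T"
  have "(\<Sum>t\<in>T. (of_bool (P t) :: int)) = of_nat (card (T \<inter> {t. P t}))"
    by (rule sum_of_bool_eq[OF f f])
  moreover have "T \<inter> {t. P t} = {t \<in> T. P t}" by blast
  ultimately show ?thesis by simp
qed

lemma runs_split:
  assumes "finite S"
  shows "card {t \<in> S. t - 1 \<in> S} + runs S = card S"
proof -
  have "S = {t \<in> S. t - 1 \<in> S} \<union> {t \<in> S. t - 1 \<notin> S}" by blast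
  moreover have "card ({t \<in> S. t - 1 \<in> S} \<union> {t \<in> S. t - 1 \<notin> S}) = card {t \<in> S. t - 1 \<in> S} + card {t \<in> S. t - 1 \<notin> S}"
    by (rule card_Un_disjoint) (use assms in auto)
  ultimately show ?thesis unfolding runs_def by simp
qed

lemma e1_runs:
  assumes fin: "finite S" and sub: "S \<subseteq> {lo<..<hi}"
  shows "e1 lo hi S = int (runs S)"
proof -
  have t1: "(\<Sum>t\<in>{lo..hi}. sg1 (True,t) * of_bool (\<exists>s\<in>st1 (True,t). s \<in> S)) = - int (card S)"
  proof -
    have "(\<Sum>t\<in>{lo..hi}. sg1 (True,t) * of_bool (\<exists>s\<in>st1 (True,t). s \<in> S)) = - (\<Sum>t\<in>{lo..hi}. (of_bool (t \<in> S) :: int))"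
      by (simp add: sg1_def st1_def sum_negf)
    also have "\<dots> = - int (card {t \<in> {lo..hi}. t \<in> S})" by (simp only: sum_bool_card[OF finite_atLeastAtMost_int])
    also have "{t \<in> {lo..hi}. t \<in> S} = S" using sub by auto
    finally show ?thesis .
  qed
  have t2: "(\<Sum>t\<in>{lo..hi}. sg1 (False,t) * of_bool (\<exists>s\<in>st1 (False,t). s \<in> S)) = int (card S) + int (runs S)"
  proof -
    have "(\<Sum>t\<in>{lo..hi}. sg1 (False,t) * of_bool (\<exists>s\<in>st1 (False,t). s \<in> S)) = (\<Sum>t\<in>{lo..hi}. (of_bool (t - 1 \<in> S \<or> t \<in> S) :: int))"
      by (simp add: sg1_def st1_def)
    also have "\<dots> = int (card {t \<in> {lo..hi}. t - 1 \<in> S \<or> t \<in> S})" by (simp only: sum_bool_card[OF finite_atLeastAtMost_int])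
    also have "{t \<in> {lo..hi}. t - 1 \<in> S \<or> t \<in> S} = S \<union> (\<lambda>s. s + 1) ` S" using sub by force
    also have "card (S \<union> (\<lambda>s. s + 1) ` S) = card S + card ((\<lambda>s. s + 1) ` S) - card (S \<inter> (\<lambda>s. s + 1) ` S)"
      using card_Un_Int[of S "(\<lambda>s. s + 1) ` S"] fin by simp
    also have "card ((\<lambda>s. s + 1) ` S) = card S" by (rule card_image) (auto simp: inj_on_def)
    also have "S \<inter> (\<lambda>s. s + 1) ` S = {t \<in> S. t - 1 \<in> S}" by force
    finally show ?thesis using runs_split[OF fin] by linarith
  qed
  show ?thesis unfolding e1_def sumB1 t1 t2 by simp
qed

lemma a1_runs:
  assumes fin: "finite S" and sub: "S \<subseteq> {lo<..<hi}"
  shows "a1 lo hi S = - int (runs S)"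
proof -
  have t1: "(\<Sum>t\<in>{lo..hi}. sg1 (True,t) * of_bool (\<forall>s\<in>st1 (True,t). s \<in> S)) = - int (card S)"
  proof -
    have "(\<Sum>t\<in>{lo..hi}. sg1 (True,t) * of_bool (\<forall>s\<in>st1 (True,t). s \<in> S)) = - (\<Sum>t\<in>{lo..hi}. (of_bool (t \<in> S) :: int))"
      by (simp add: sg1_def st1_def sum_negf)
    also have "\<dots> = - int (card {t \<in> {lo..hi}. t \<in> S})" by (simp only: sum_bool_card[OF finite_atLeastAtMost_int])
    also have "{t \<in> {lo..hi}. t \<in> S} = S" using sub by auto
    finally show ?thesis .
  qed
  have t2: "(\<Sum>t\<in>{lo..hi}. sg1 (False,t) * of_bool (\<forall>s\<in>st1 (False,t). s \<in> S)) = int (card S) - int (runs S)"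
  proof -
    have "(\<Sum>t\<in>{lo..hi}. sg1 (False,t) * of_bool (\<forall>s\<in>st1 (False,t). s \<in> S)) = (\<Sum>t\<in>{lo..hi}. (of_bool (t - 1 \<in> S \<and> t \<in> S) :: int))"
      by (simp add: sg1_def st1_def)
    also have "\<dots> = int (card {t \<in> {lo..hi}. t - 1 \<in> S \<and> t \<in> S})" by (simp only: sum_bool_card[OF finite_atLeastAtMost_int])
    also have "{t \<in> {lo..hi}. t - 1 \<in> S \<and> t \<in> S} = {t \<in> S. t - 1 \<in> S}" using sub by force
    finally show ?thesis using runs_split[OF fin] by linarith
  qed
  show ?thesis unfolding a1_def sumB1 t1 t2 by simp
qed


definition sl :: "pt set \<Rightarrow> int \<Rightarrow> (int \<times> int) set" where "sl C t = {(x,y). (x,y,t) \<in> C}"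
definition ex2 :: "(int \<times> int) set \<Rightarrow> cell1 \<Rightarrow> cell1 \<Rightarrow> bool" where
  "ex2 L cx cy = (\<exists>x\<in>st1 cx. \<exists>y\<in>st1 cy. (x,y) \<in> L)"
definition al2 :: "(int \<times> int) set \<Rightarrow> cell1 \<Rightarrow> cell1 \<Rightarrow> bool" where
  "al2 L cx cy = (\<forall>x\<in>st1 cx. \<forall>y\<in>st1 cy. (x,y) \<in> L)"
definition S2 :: "int \<Rightarrow> int \<Rightarrow> (cell1 \<Rightarrow> cell1 \<Rightarrow> bool) \<Rightarrow> int" where
  "S2 lo hi P = (\<Sum>cx\<in>B1 lo hi. \<Sum>cy\<in>B1 lo hi. sg1 cx * sg1 cy * of_bool (P cx cy))"

lemma ex3_T: "ex3 C (cx,cy,(True,t)) = ex2 (sl C t) cx cy"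
  unfolding ex3_def ex2_def sl_def st3_def by (auto simp: st1_def)
lemma ex3_F: "ex3 C (cx,cy,(False,t)) = (ex2 (sl C (t-1)) cx cy \<or> ex2 (sl C t) cx cy)"
  unfolding ex3_def ex2_def sl_def st3_def by (auto simp: st1_def)
lemma al3_T: "al3 C (cx,cy,(True,t)) = al2 (sl C t) cx cy"
  unfolding al3_def al2_def sl_def st3_def by (auto simp: st1_def)
lemma al3_F: "al3 C (cx,cy,(False,t)) = (al2 (sl C (t-1)) cx cy \<and> al2 (sl C t) cx cy)"
  unfolding al3_def al2_def sl_def st3_def by (auto simp: st1_def)

lemma chi_layers:
  assumes "inbox lo hi C"
  shows "boundary_euler C = (\<Sum>t\<in>{lo..hi}.
     S2 lo hi (ex2 (sl C (t-1))) + S2 lo hi (al2 (sl C t))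
     - S2 lo hi (\<lambda>cx cy. ex2 (sl C (t-1)) cx cy \<and> ex2 (sl C t) cx cy)
     - S2 lo hi (\<lambda>cx cy. al2 (sl C (t-1)) cx cy \<and> al2 (sl C t) cx cy))"
proof -
  define F where "F c = sg3 c * (of_bool (ex3 C c) - of_bool (al3 C c))" for c
  have "boundary_euler C = (\<Sum>c\<in>B3 lo hi. F c)" unfolding F_def by (rule euler_sum[OF assms])
  also have "\<dots> = (\<Sum>cx\<in>B1 lo hi. \<Sum>cy\<in>B1 lo hi. \<Sum>cz\<in>B1 lo hi. F (cx,cy,cz))"
    unfolding B3_def by (simp add: sum.cartesian_product)
  also have "\<dots> = (\<Sum>cx\<in>B1 lo hi. \<Sum>cy\<in>B1 lo hi. \<Sum>t\<in>{lo..hi}. F (cx,cy,(True,t)) + F (cx,cy,(False,t)))"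
    by (simp add: sumB1 sum.distrib)
  also have "\<dots> = (\<Sum>t\<in>{lo..hi}. \<Sum>cx\<in>B1 lo hi. \<Sum>cy\<in>B1 lo hi. F (cx,cy,(True,t)) + F (cx,cy,(False,t)))"
    by (simp add: sum.swap[of _ "{lo..hi}"])
  also have "\<dots> = (\<Sum>t\<in>{lo..hi}.
     S2 lo hi (ex2 (sl C (t-1))) + S2 lo hi (al2 (sl C t))
     - S2 lo hi (\<lambda>cx cy. ex2 (sl C (t-1)) cx cy \<and> ex2 (sl C t) cx cy)
     - S2 lo hi (\<lambda>cx cy. al2 (sl C (t-1)) cx cy \<and> al2 (sl C t) cx cy))"
  proof (rule sum.cong[OF refl])
    fix t
    have pw: "F (cx,cy,(True,t)) + F (cx,cy,(False,t)) =
      sg1 cx * sg1 cy * of_bool (ex2 (sl C (t-1)) cx cy) + sg1 cx * sg1 cy * of_bool (al2 (sl C t) cx cy)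
      - sg1 cx * sg1 cy * of_bool (ex2 (sl C (t-1)) cx cy \<and> ex2 (sl C t) cx cy)
      - sg1 cx * sg1 cy * of_bool (al2 (sl C (t-1)) cx cy \<and> al2 (sl C t) cx cy)" for cx cy
      unfolding F_def ex3_T ex3_F al3_T al3_F sg3_def
      by (cases "ex2 (sl C (t-1)) cx cy"; cases "ex2 (sl C t) cx cy"; cases "al2 (sl C (t-1)) cx cy"; cases "al2 (sl C t) cx cy")
         (simp_all add: sg1_def algebra_simps)
    show "(\<Sum>cx\<in>B1 lo hi. \<Sum>cy\<in>B1 lo hi. F (cx,cy,(True,t)) + F (cx,cy,(False,t))) =
     S2 lo hi (ex2 (sl C (t-1))) + S2 lo hi (al2 (sl C t))
     - S2 lo hi (\<lambda>cx cy. ex2 (sl C (t-1)) cx cy \<and> ex2 (sl C t) cx cy)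
     - S2 lo hi (\<lambda>cx cy. al2 (sl C (t-1)) cx cy \<and> al2 (sl C t) cx cy)"
      unfolding pw S2_def by (simp add: sum.distrib sum_subtractf)
  qed
  finally show ?thesis .
qed


lemma S2_prod: "S2 lo hi (\<lambda>cx cy. P cx \<and> Q cy) =
   (\<Sum>cx\<in>B1 lo hi. sg1 cx * of_bool (P cx)) * (\<Sum>cy\<in>B1 lo hi. sg1 cy * of_bool (Q cy))"
  unfolding S2_def sum_product by (rule sum.cong[OF refl], rule sum.cong[OF refl]) auto

lemma st1_ne: "st1 c \<noteq> {}" unfolding st1_def by auto

lemma ex2_prod: "ex2 (X \<times> Y) cx cy = ((\<exists>x\<in>st1 cx. x \<in> X) \<and> (\<exists>y\<in>st1 cy. y \<in> Y))"
  unfolding ex2_def by auto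
lemma al2_prod: "al2 (X \<times> Y) cx cy = ((\<forall>x\<in>st1 cx. x \<in> X) \<and> (\<forall>y\<in>st1 cy. y \<in> Y))"
  unfolding al2_def using st1_ne by fast

lemma ex_nested: "X1 \<subseteq> X2 \<or> X2 \<subseteq> X1 \<Longrightarrow>
  ((\<exists>x\<in>S. x \<in> X1) \<and> (\<exists>x\<in>S. x \<in> X2)) = (\<exists>x\<in>S. x \<in> X1 \<inter> X2)"
  by auto

lemma S2_ex: "S2 lo hi (ex2 (X \<times> Y)) = e1 lo hi X * e1 lo hi Y"
proof -
  have "S2 lo hi (ex2 (X \<times> Y)) = S2 lo hi (\<lambda>cx cy. (\<exists>x\<in>st1 cx. x \<in> X) \<and> (\<exists>y\<in>st1 cy. y \<in> Y))"
    unfolding ex2_prod by simp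
  then show ?thesis unfolding S2_prod e1_def .
qed

lemma S2_al: "S2 lo hi (al2 (X \<times> Y)) = a1 lo hi X * a1 lo hi Y"
proof -
  have "S2 lo hi (al2 (X \<times> Y)) = S2 lo hi (\<lambda>cx cy. (\<forall>x\<in>st1 cx. x \<in> X) \<and> (\<forall>y\<in>st1 cy. y \<in> Y))"
    unfolding al2_prod by simp
  then show ?thesis unfolding S2_prod a1_def .
qed

lemma S2_ex2:
  assumes "X1 \<subseteq> X2 \<or> X2 \<subseteq> X1" "Y1 \<subseteq> Y2 \<or> Y2 \<subseteq> Y1"
  shows "S2 lo hi (\<lambda>cx cy. ex2 (X1 \<times> Y1) cx cy \<and> ex2 (X2 \<times> Y2) cx cy) = e1 lo hi (X1 \<inter> X2) * e1 lo hi (Y1 \<inter> Y2)"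
proof -
  have "S2 lo hi (\<lambda>cx cy. ex2 (X1 \<times> Y1) cx cy \<and> ex2 (X2 \<times> Y2) cx cy) =
        S2 lo hi (\<lambda>cx cy. (\<exists>x\<in>st1 cx. x \<in> X1 \<inter> X2) \<and> (\<exists>y\<in>st1 cy. y \<in> Y1 \<inter> Y2))"
  proof -
    have pw: "\<And>cx cy. (ex2 (X1 \<times> Y1) cx cy \<and> ex2 (X2 \<times> Y2) cx cy) = ((\<exists>x\<in>st1 cx. x \<in> X1 \<inter> X2) \<and> (\<exists>y\<in>st1 cy. y \<in> Y1 \<inter> Y2))"
      unfolding ex2_prod using assms by blast
    show ?thesis by (simp only: pw)
  qed
  then show ?thesis unfolding S2_prod e1_def .
qed

lemma S2_al2:
  shows "S2 lo hi (\<lambda>cx cy. al2 (X1 \<times> Y1) cx cy \<and> al2 (X2 \<times> Y2) cx cy) = a1 lo hi (X1 \<inter> X2) * a1 lo hi (Y1 \<inter> Y2)"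
proof -
  have "S2 lo hi (\<lambda>cx cy. al2 (X1 \<times> Y1) cx cy \<and> al2 (X2 \<times> Y2) cx cy) =
        S2 lo hi (\<lambda>cx cy. (\<forall>x\<in>st1 cx. x \<in> X1 \<inter> X2) \<and> (\<forall>y\<in>st1 cy. y \<in> Y1 \<inter> Y2))"
  proof -
    have pw: "\<And>cx cy. (al2 (X1 \<times> Y1) cx cy \<and> al2 (X2 \<times> Y2) cx cy) = ((\<forall>x\<in>st1 cx. x \<in> X1 \<inter> X2) \<and> (\<forall>y\<in>st1 cy. y \<in> Y1 \<inter> Y2))"
      unfolding al2_prod by blast
    show ?thesis by (simp only: pw)
  qed
  then show ?thesis unfolding S2_prod a1_def .
qed

lemma chi_prod:
  assumes box: "inbox lo hi C"
    and sl: "\<And>t. sl C t = X t \<times> Y t"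
    and fin: "\<And>t. finite (X t)" "\<And>t. finite (Y t)"
    and sub: "\<And>t. X t \<subseteq> {lo<..<hi}" "\<And>t. Y t \<subseteq> {lo<..<hi}"
    and nest: "\<And>t. X (t-1) \<subseteq> X t \<or> X t \<subseteq> X (t-1)" "\<And>t. Y (t-1) \<subseteq> Y t \<or> Y t \<subseteq> Y (t-1)"
  shows "boundary_euler C = (\<Sum>t\<in>{lo..hi}.
      int (runs (X (t-1))) * int (runs (Y (t-1))) + int (runs (X t)) * int (runs (Y t))
      - 2 * (int (runs (X (t-1) \<inter> X t)) * int (runs (Y (t-1) \<inter> Y t))))"
  unfolding chi_layers[OF box] sl
proof (rule sum.cong[OF refl])
  fix t
  have fi: "finite (X (t-1) \<inter> X t)" "finite (Y (t-1) \<inter> Y t)" using fin by auto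
  have si: "X (t-1) \<inter> X t \<subseteq> {lo<..<hi}" "Y (t-1) \<inter> Y t \<subseteq> {lo<..<hi}" using sub by blast+
  show "S2 lo hi (ex2 (X (t - 1) \<times> Y (t - 1))) + S2 lo hi (al2 (X t \<times> Y t)) -
         S2 lo hi (\<lambda>cx cy. ex2 (X (t - 1) \<times> Y (t - 1)) cx cy \<and> ex2 (X t \<times> Y t) cx cy) -
         S2 lo hi (\<lambda>cx cy. al2 (X (t - 1) \<times> Y (t - 1)) cx cy \<and> al2 (X t \<times> Y t) cx cy) =
         int (runs (X (t - 1))) * int (runs (Y (t - 1))) + int (runs (X t)) * int (runs (Y t)) -
         2 * (int (runs (X (t - 1) \<inter> X t)) * int (runs (Y (t - 1) \<inter> Y t)))"
    unfolding S2_ex S2_al S2_ex2[OF nest(1) nest(2)] S2_al2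
      e1_runs[OF fin(1) sub(1)] e1_runs[OF fin(2) sub(2)] a1_runs[OF fin(1) sub(1)] a1_runs[OF fin(2) sub(2)]
      e1_runs[OF fi(1) si(1)] e1_runs[OF fi(2) si(2)] a1_runs[OF fi(1) si(1)] a1_runs[OF fi(2) si(2)]
    by simp
qed


definition FF :: "nat \<Rightarrow> (nat \<Rightarrow> int) \<Rightarrow> int \<Rightarrow> int" where
  "FF m r t = (if 0 \<le> t \<and> t < int m then r (nat t) else 0)"

lemma sum_shift_a:
  assumes "lo \<le> 0" "int m - 1 \<le> hi"
  shows "(\<Sum>t\<in>{lo..hi}. FF m r t) = (\<Sum>i<m. r i)"
proof -
  have "(\<Sum>t\<in>{lo..hi}. FF m r t) = (\<Sum>t\<in>int ` {..<m}. FF m r t)"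
  proof (rule sum.mono_neutral_right)
    show "\<forall>i\<in>{lo..hi} - int ` {..<m}. FF m r i = 0"
    proof
      fix t assume t: "t \<in> {lo..hi} - int ` {..<m}"
      show "FF m r t = 0"
      proof (cases "0 \<le> t \<and> t < int m")
        case True
        then have "t = int (nat t)" "nat t < m" by auto
        then show ?thesis using t by blast
      qed (auto simp: FF_def)
    qed
  qed (use assms in auto)
  also have "\<dots> = (\<Sum>i<m. FF m r (int i))" by (rule sum.reindex_cong[of int]) (auto simp: inj_on_def)
  also have "\<dots> = (\<Sum>i<m. r i)" by (rule sum.cong) (auto simp: FF_def)
  finally show ?thesis .
qed

lemma sum_shift_b:
  assumes "lo \<le> 1" "int m \<le> hi"
  shows "(\<Sum>t\<in>{lo..hi}. FF m r (t - 1)) = (\<Sum>i<m. r i)"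
proof -
  have "(\<Sum>t\<in>{lo..hi}. FF m r (t - 1)) = (\<Sum>t\<in>(\<lambda>i. int i + 1) ` {..<m}. FF m r (t - 1))"
  proof (rule sum.mono_neutral_right)
    show "\<forall>i\<in>{lo..hi} - (\<lambda>i. int i + 1) ` {..<m}. FF m r (i - 1) = 0"
    proof
      fix t assume t: "t \<in> {lo..hi} - (\<lambda>i. int i + 1) ` {..<m}"
      show "FF m r (t - 1) = 0"
      proof (cases "1 \<le> t \<and> t \<le> int m")
        case True
        then have "t = int (nat (t - 1)) + 1" "nat (t - 1) < m" by auto
        then show ?thesis using t by blast
      qed (auto simp: FF_def)
    qed
  qed (use assms in auto)
  also have "\<dots> = (\<Sum>i<m. FF m r (int i + 1 - 1))" by (rule sum.reindex_cong[of "\<lambda>i. int i + 1"]) (auto simp: inj_on_def)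
  also have "\<dots> = (\<Sum>i<m. r i)" by (rule sum.cong) (auto simp: FF_def)
  finally show ?thesis .
qed

lemma sum_shift_c:
  assumes "lo \<le> 1" "int m \<le> hi"
  shows "(\<Sum>t\<in>{lo..hi}. FF m r (t - 1) * FF m r t) = (\<Sum>i<m - 1. r i * r (i + 1))"
proof -
  have "(\<Sum>t\<in>{lo..hi}. FF m r (t - 1) * FF m r t) = (\<Sum>t\<in>(\<lambda>i. int i + 1) ` {..<m - 1}. FF m r (t - 1) * FF m r t)"
  proof (rule sum.mono_neutral_right)
    show "(\<lambda>i. int i + 1) ` {..<m - 1} \<subseteq> {lo..hi}" using assms by auto
    show "\<forall>i\<in>{lo..hi} - (\<lambda>i. int i + 1) ` {..<m - 1}. FF m r (i - 1) * FF m r i = 0"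
    proof
      fix t assume t: "t \<in> {lo..hi} - (\<lambda>i. int i + 1) ` {..<m - 1}"
      show "FF m r (t - 1) * FF m r t = 0"
      proof (cases "1 \<le> t \<and> t < int m")
        case True
        then have "t = int (nat (t - 1)) + 1" "nat (t - 1) < m - 1" by auto
        then show ?thesis using t by blast
      qed (auto simp: FF_def)
    qed
  qed simp
  also have "\<dots> = (\<Sum>i<m - 1. FF m r (int i + 1 - 1) * FF m r (int i + 1))"
    by (rule sum.reindex_cong[of "\<lambda>i. int i + 1"]) (auto simp: inj_on_def)
  also have "\<dots> = (\<Sum>i<m - 1. r i * r (i + 1))"
    by (rule sum.cong) (auto simp: FF_def nat_add_distrib)
  finally show ?thesis .
qed


definition AA :: "config \<Rightarrow> nat \<Rightarrow> int set" where "AA Q i = (\<lambda>j. int j - 1) ` (Q ! i)"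
definition UU :: "nat \<Rightarrow> int set" where "UU n = {0..<int n}"
definition XX :: "nat \<Rightarrow> config \<Rightarrow> int \<Rightarrow> int set" where
  "XX n Q t = (if 0 \<le> t \<and> t < int (length Q) then (if even (nat t) then UU n else AA Q (nat t)) else {})"
definition YY :: "nat \<Rightarrow> config \<Rightarrow> int \<Rightarrow> int set" where
  "YY n Q t = (if 0 \<le> t \<and> t < int (length Q) then (if even (nat t) then AA Q (nat t) else UU n) else {})"

lemma cfg_mem:
  "(x,y,t) \<in> config_cubes n Q \<longleftrightarrow> (0 \<le> t \<and> t < int (length Q) \<and>
     (even (nat t) \<longrightarrow> x \<in> UU n \<and> y \<in> AA Q (nat t)) \<and>
     (odd (nat t) \<longrightarrow> x \<in> AA Q (nat t) \<and> y \<in> UU n))"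
proof
  assume "(x,y,t) \<in> config_cubes n Q"
  then show "0 \<le> t \<and> t < int (length Q) \<and>
     (even (nat t) \<longrightarrow> x \<in> UU n \<and> y \<in> AA Q (nat t)) \<and>
     (odd (nat t) \<longrightarrow> x \<in> AA Q (nat t) \<and> y \<in> UU n)"
    unfolding config_cubes_def UU_def AA_def by auto
next
  assume h: "0 \<le> t \<and> t < int (length Q) \<and>
     (even (nat t) \<longrightarrow> x \<in> UU n \<and> y \<in> AA Q (nat t)) \<and>
     (odd (nat t) \<longrightarrow> x \<in> AA Q (nat t) \<and> y \<in> UU n)"
  define i where "i = nat t"
  have ti: "t = int i" "i < length Q" using h unfolding i_def by auto
  show "(x,y,t) \<in> config_cubes n Q"
  proof (cases "even i")
    case True
    then have "x \<in> UU n" "y \<in> AA Q i" using h i_def by auto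
    then obtain j where j: "j \<in> Q ! i" "y = int j - 1" unfolding AA_def by auto
    have "x = int (nat x)" "nat x < n" using \<open>x \<in> UU n\<close> unfolding UU_def by auto
    then have "(x,y,t) = (int (nat x), int j - 1, int i) \<and> i < length Q \<and> even i \<and> j \<in> Q ! i \<and> nat x < n"
      using j ti True by auto
    then show ?thesis unfolding config_cubes_def by blast
  next
    case False
    then have "y \<in> UU n" "x \<in> AA Q i" using h i_def by auto
    then obtain j where j: "j \<in> Q ! i" "x = int j - 1" unfolding AA_def by auto
    have "y = int (nat y)" "nat y < n" using \<open>y \<in> UU n\<close> unfolding UU_def by auto
    then have "(x,y,t) = (int j - 1, int (nat y), int i) \<and> i < length Q \<and> odd i \<and> j \<in> Q ! i \<and> nat y < n"
      using j ti False by auto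
    then show ?thesis unfolding config_cubes_def by blast
  qed
qed

lemma sl_cfg: "sl (config_cubes n Q) t = XX n Q t \<times> YY n Q t"
  unfolding sl_def cfg_mem XX_def YY_def by auto

lemma runs_UU: "n \<ge> 1 \<Longrightarrow> runs (UU n) = 1"
proof -
  assume "n \<ge> 1"
  then have "{t \<in> UU n. t - 1 \<notin> UU n} = {0}" unfolding UU_def by auto
  then show ?thesis unfolding runs_def by simp
qed

lemma runs_empty: "runs {} = 0" unfolding runs_def by simp

lemma AA_sub: "Q ! i \<subseteq> {1..n} \<Longrightarrow> AA Q i \<subseteq> UU n"
  unfolding AA_def UU_def by force

lemma AA_fin: "Q ! i \<subseteq> {1..n} \<Longrightarrow> finite (AA Q i)"
  unfolding AA_def by (meson finite_atLeastAtMost finite_imageI finite_subset)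

lemma Qsub_t: "\<forall>i<length Q. Q ! i \<subseteq> {1..n} \<Longrightarrow> 0 \<le> t \<Longrightarrow> t < int (length Q) \<Longrightarrow> Q ! (nat t) \<subseteq> {1..n}"
  by (simp add: nat_less_iff)
lemma XX_sub: "\<forall>i<length Q. Q ! i \<subseteq> {1..n} \<Longrightarrow> XX n Q t \<subseteq> UU n"
  unfolding XX_def using AA_sub[OF Qsub_t] by auto
lemma YY_sub: "\<forall>i<length Q. Q ! i \<subseteq> {1..n} \<Longrightarrow> YY n Q t \<subseteq> UU n"
  unfolding YY_def using AA_sub[OF Qsub_t] by auto
lemma XX_fin: "\<forall>i<length Q. Q ! i \<subseteq> {1..n} \<Longrightarrow> finite (XX n Q t)"
  unfolding XX_def UU_def using AA_fin[OF Qsub_t] by auto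
lemma YY_fin: "\<forall>i<length Q. Q ! i \<subseteq> {1..n} \<Longrightarrow> finite (YY n Q t)"
  unfolding YY_def UU_def using AA_fin[OF Qsub_t] by auto

lemma par_shift: "1 \<le> t \<Longrightarrow> even (nat (t - 1)) \<longleftrightarrow> odd (nat t)"
proof -
  assume "1 \<le> t"
  then have "nat t = Suc (nat (t - 1))" by auto
  then show ?thesis by simp
qed

lemma XX_nest: "\<forall>i<length Q. Q ! i \<subseteq> {1..n} \<Longrightarrow> XX n Q (t-1) \<subseteq> XX n Q t \<or> XX n Q t \<subseteq> XX n Q (t-1)"
proof -
  assume a: "\<forall>i<length Q. Q ! i \<subseteq> {1..n}"
  have s1: "XX n Q (t-1) \<subseteq> UU n" "XX n Q t \<subseteq> UU n" using XX_sub[OF a] by auto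
  show ?thesis
  proof (cases "0 \<le> t - 1 \<and> t < int (length Q)")
    case True
    then have "even (nat (t - 1)) \<longleftrightarrow> odd (nat t)" using par_shift by auto
    then have "XX n Q (t-1) = UU n \<or> XX n Q t = UU n" using True unfolding XX_def by auto
    then show ?thesis using s1 by auto
  next
    case False
    then have "XX n Q (t-1) = {} \<or> XX n Q t = {}" unfolding XX_def by auto
    then show ?thesis by auto
  qed
qed

lemma YY_nest: "\<forall>i<length Q. Q ! i \<subseteq> {1..n} \<Longrightarrow> YY n Q (t-1) \<subseteq> YY n Q t \<or> YY n Q t \<subseteq> YY n Q (t-1)"
proof -
  assume a: "\<forall>i<length Q. Q ! i \<subseteq> {1..n}"
  have s1: "YY n Q (t-1) \<subseteq> UU n" "YY n Q t \<subseteq> UU n" using YY_sub[OF a] by auto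
  show ?thesis
  proof (cases "0 \<le> t - 1 \<and> t < int (length Q)")
    case True
    then have "even (nat (t - 1)) \<longleftrightarrow> odd (nat t)" using par_shift by auto
    then have "YY n Q (t-1) = UU n \<or> YY n Q t = UU n" using True unfolding YY_def by auto
    then show ?thesis using s1 by auto
  next
    case False
    then have "YY n Q (t-1) = {} \<or> YY n Q t = {}" unfolding YY_def by auto
    then show ?thesis by auto
  qed
qed

definition rr :: "config \<Rightarrow> nat \<Rightarrow> int" where "rr Q i = int (runs (AA Q i))"

lemma rho_eq:
  assumes "n \<ge> 1"
  shows "int (runs (XX n Q t)) * int (runs (YY n Q t)) = FF (length Q) (rr Q) t"
  unfolding XX_def YY_def FF_def rr_def using runs_UU[OF assms] runs_empty by auto

lemma mu_eq:
  assumes "n \<ge> 1" "\<forall>i<length Q. Q ! i \<subseteq> {1..n}"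
  shows "int (runs (XX n Q (t-1) \<inter> XX n Q t)) * int (runs (YY n Q (t-1) \<inter> YY n Q t)) =
         FF (length Q) (rr Q) (t-1) * FF (length Q) (rr Q) t"
proof (cases "0 \<le> t - 1 \<and> t < int (length Q)")
  case True
  have p: "even (nat (t - 1)) \<longleftrightarrow> odd (nat t)" using par_shift True by auto
  have s: "AA Q (nat (t-1)) \<subseteq> UU n" "AA Q (nat t) \<subseteq> UU n" using AA_sub[OF Qsub_t[OF assms(2)]] True by auto
  show ?thesis
  proof (cases "even (nat t)")
    case True2: True
    then have "XX n Q (t-1) \<inter> XX n Q t = AA Q (nat (t-1))" "YY n Q (t-1) \<inter> YY n Q t = AA Q (nat t)"
      using True p s unfolding XX_def YY_def by auto
    then show ?thesis using True unfolding FF_def rr_def by simp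
  next
    case False2: False
    then have "XX n Q (t-1) \<inter> XX n Q t = AA Q (nat t)" "YY n Q (t-1) \<inter> YY n Q t = AA Q (nat (t-1))"
      using True p s unfolding XX_def YY_def by auto
    then show ?thesis using True unfolding FF_def rr_def by simp
  qed
next
  case False
  then have "XX n Q (t-1) \<inter> XX n Q t = {}" unfolding XX_def by auto
  then show ?thesis using False runs_empty unfolding FF_def by auto
qed

lemma inbox_cfg:
  assumes "\<forall>i<length Q. Q ! i \<subseteq> {1..n}"
  shows "inbox (-1) (int n + int (length Q) + 1) (config_cubes n Q)"
  unfolding inbox_def
proof (intro allI impI)
  fix x y z assume "(x,y,z) \<in> config_cubes n Q"
  then have h: "0 \<le> z \<and> z < int (length Q) \<and> x \<in> XX n Q z \<and> y \<in> YY n Q z"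
    unfolding cfg_mem XX_def YY_def by auto
  have "x \<in> UU n" "y \<in> UU n" using h XX_sub[OF assms] YY_sub[OF assms] by auto
  then show "- 1 < x \<and> x < int n + int (length Q) + 1 \<and> - 1 < y \<and> y < int n + int (length Q) + 1 \<and>
      - 1 < z \<and> z < int n + int (length Q) + 1" using h unfolding UU_def by auto
qed

theorem chi_config:
  assumes n1: "n \<ge> 1" and sub: "\<forall>i<length Q. Q ! i \<subseteq> {1..n}"
  shows "boundary_euler (config_cubes n Q) =
     2 * (\<Sum>i<length Q. rr Q i) - 2 * (\<Sum>i<length Q - 1. rr Q i * rr Q (i + 1))"
proof -
  let ?m = "length Q"
  let ?hi = "int n + int ?m + 1"
  let ?F = "FF ?m (rr Q)"
  have "boundary_euler (config_cubes n Q) = (\<Sum>t\<in>{-1..?hi}.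
      int (runs (XX n Q (t-1))) * int (runs (YY n Q (t-1))) + int (runs (XX n Q t)) * int (runs (YY n Q t))
      - 2 * (int (runs (XX n Q (t-1) \<inter> XX n Q t)) * int (runs (YY n Q (t-1) \<inter> YY n Q t))))"
  proof (rule chi_prod[OF inbox_cfg[OF sub] sl_cfg])
    show "\<And>t. finite (XX n Q t)" using XX_fin[OF sub] .
    show "\<And>t. finite (YY n Q t)" using YY_fin[OF sub] .
    show "\<And>t. XX n Q t \<subseteq> {- 1<..<?hi}" using XX_sub[OF sub] unfolding UU_def by fastforce
    show "\<And>t. YY n Q t \<subseteq> {- 1<..<?hi}" using YY_sub[OF sub] unfolding UU_def by fastforce
    show "\<And>t. XX n Q (t-1) \<subseteq> XX n Q t \<or> XX n Q t \<subseteq> XX n Q (t-1)" using XX_nest[OF sub] .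
    show "\<And>t. YY n Q (t-1) \<subseteq> YY n Q t \<or> YY n Q t \<subseteq> YY n Q (t-1)" using YY_nest[OF sub] .
  qed
  also have "\<dots> = (\<Sum>t\<in>{-1..?hi}. ?F (t-1) + ?F t - 2 * (?F (t-1) * ?F t))"
    by (rule sum.cong[OF refl]) (simp only: rho_eq[OF n1] mu_eq[OF n1 sub])
  also have "\<dots> = (\<Sum>t\<in>{-1..?hi}. ?F (t-1)) + (\<Sum>t\<in>{-1..?hi}. ?F t) - 2 * (\<Sum>t\<in>{-1..?hi}. ?F (t-1) * ?F t)"
    by (simp add: sum.distrib sum_subtractf sum_distrib_left)
  also have "\<dots> = 2 * (\<Sum>i<?m. rr Q i) - 2 * (\<Sum>i<?m - 1. rr Q i * rr Q (i + 1))"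
    using sum_shift_a[of "-1" ?m ?hi "rr Q"] sum_shift_b[of "-1" ?m ?hi "rr Q"] sum_shift_c[of "-1" ?m ?hi "rr Q"]
    by simp
  finally show ?thesis .
qed


definition tot :: "config \<Rightarrow> int" where "tot Q = sum_list (map (\<lambda>L. int (card L)) Q)"

definition Inv :: "nat \<Rightarrow> nat \<Rightarrow> config \<Rightarrow> bool" where
  "Inv n k Q \<longleftrightarrow> (\<forall>i<length Q. Q ! i \<subseteq> {1..n}) \<and> tot Q = int (n * k) \<and> k \<le> length Q
     \<and> Q ! (length Q - 2) = {1..n} \<and> n \<le> card (Q ! (length Q - 3)) + card (Q ! (length Q - 1))"

lemma sl_upd: "k < length xs \<Longrightarrow> sum_list (xs[k := x]) = sum_list xs + x - xs ! k" for xs :: "'a::ab_group_add list"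
proof (induction xs arbitrary: k)
  case Nil then show ?case by simp
next
  case (Cons a xs)
  then show ?case by (cases k) (auto simp: algebra_simps)
qed

lemma tot_upd: "i < length Q \<Longrightarrow> tot (Q[i := X]) = tot Q + int (card X) - int (card (Q ! i))"
  unfolding tot_def map_update by (simp add: sl_upd)

lemma tot_app: "tot (Q @ [X]) = tot Q + int (card X)"
  unfolding tot_def by simp

lemma Inv_init: "k \<ge> 3 \<Longrightarrow> Inv n k (initial_config n k)"
  unfolding Inv_def initial_config_def tot_def by (simp add: sum_list_replicate)

lemma butlast_upd: "R \<noteq> [] \<Longrightarrow> butlast R @ [x] = R[length R - 1 := x]"
  by (induction R rule: rev_induct) auto

lemma Inv_step:
  assumes inv: "Inv n k Q" and mv: "jenga_move n Q Q'" and k3: "k \<ge> 3"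
  shows "Inv n k Q'"
proof -
  let ?m = "length Q"
  have sub: "\<forall>i<?m. Q ! i \<subseteq> {1..n}" and tq: "tot Q = int (n * k)" and km: "k \<le> ?m"
    and full: "Q ! (?m - 2) = {1..n}" and cnt: "n \<le> card (Q ! (?m - 3)) + card (Q ! (?m - 1))"
    using inv unfolding Inv_def by auto
  have m3: "?m \<ge> 3" using km k3 by simp
  have "Q \<noteq> []" using m3 by auto
  then have lastQ: "last Q = Q ! (?m - 1)" by (simp add: last_conv_nth)
  obtain i j where i1: "i + 1 < ?m" and i2: "card (last Q) < n \<longrightarrow> i + 2 \<noteq> ?m" and j: "j \<in> Q ! i"
    and rest: "(let R = Q[i := Q ! i - {j}] in
            (if card (last Q) < n
             then (\<exists>s \<in> {1..n} - last Q. Q' = butlast R @ [insert s (last Q)])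
             else (\<exists>s \<in> {1..n}. Q' = R @ [{s}])))"
    using mv unfolding jenga_move_def by (elim exE conjE) (rule that; assumption)
  define R where "R = Q[i := Q ! i - {j}]"
  have "i < ?m" using i1 by simp
  then have "Q ! i \<subseteq> {1..n}" using sub by simp
  then have finQi: "finite (Q ! i)" by (rule finite_subset) simp
  have cardj: "card (Q ! i - {j}) = card (Q ! i) - 1" using j finQi by simp
  have "card (Q ! i) > 0" using j finQi by (auto simp: card_gt_0_iff)
  then have cardj1: "card (Q ! i) \<ge> 1" by simp
  have lenR: "length R = ?m" unfolding R_def by simp
  have Rnth: "R ! p = (if p = i then Q ! i - {j} else Q ! p)" if "p < ?m" for p
    unfolding R_def using that i1 by auto
  have totR: "tot R = tot Q - 1" unfolding R_def using tot_upd[of i Q] i1 cardj cardj1 by simp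
  have subR: "\<forall>p<?m. R ! p \<subseteq> {1..n}" using sub Rnth by auto
  show ?thesis
  proof (cases "card (last Q) < n")
    case True
    then obtain s where s: "s \<in> {1..n} - last Q" and Q': "Q' = butlast R @ [insert s (last Q)]"
      using rest unfolding R_def[symmetric] Let_def by auto
    have "R \<noteq> []" using lenR m3 by auto
    then have Q'2: "Q' = R[?m - 1 := insert s (last Q)]" using Q' butlast_upd[of R "insert s (last Q)"] lenR by simp
    have len': "length Q' = ?m" using Q'2 lenR by simp
    have lsub1: "last Q \<subseteq> {1..n}" using sub lastQ m3 by simp
    then have finl: "finite (last Q)" by (rule finite_subset) simp
    have cards: "card (insert s (last Q)) = card (last Q) + 1" using s finl by simp
    have im: "i \<noteq> ?m - 2" "i < ?m - 1" using i1 i2 True by auto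
    have nth': "Q' ! p = (if p = ?m - 1 then insert s (last Q) else R ! p)" if "p < ?m" for p
      using Q'2 lenR that by auto
    have "tot Q' = tot R + int (card (insert s (last Q))) - int (card (R ! (?m - 1)))"
      unfolding Q'2 using tot_upd[of "?m - 1" R] lenR m3 by simp
    also have "R ! (?m - 1) = last Q" using Rnth im lastQ m3 by simp
    finally have tot': "tot Q' = int (n * k)" using totR tq cards by simp
    have sub': "\<forall>p<length Q'. Q' ! p \<subseteq> {1..n}" using nth' subR s len' lsub1 by auto
    have full': "Q' ! (length Q' - 2) = {1..n}" using nth' Rnth full im len' m3 by simp
    have c3: "card (Q' ! (length Q' - 3)) + 1 \<ge> card (Q ! (?m - 3))"
      using nth' Rnth len' m3 cardj by auto
    have c1: "card (Q' ! (length Q' - 1)) = card (last Q) + 1" using nth' len' m3 cards by simp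
    have cnt': "n \<le> card (Q' ! (length Q' - 3)) + card (Q' ! (length Q' - 1))"
      using c3 c1 cnt lastQ by simp
    show ?thesis unfolding Inv_def using sub' tot' len' km full' cnt' by simp
  next
    case False
    then obtain s where s: "s \<in> {1..n}" and Q': "Q' = R @ [{s}]"
      using rest unfolding R_def[symmetric] Let_def by auto
    have len': "length Q' = ?m + 1" using Q' lenR by simp
    have nth': "Q' ! p = (if p = ?m then {s} else R ! p)" if "p < ?m + 1" for p
      using Q' lenR that by (auto simp: nth_append)
    have "last Q \<subseteq> {1..n}" using sub lastQ m3 by simp
    then have finl: "finite (last Q)" by (rule finite_subset) simp
    have lsub: "last Q \<subseteq> {1..n}" using sub lastQ m3 by simp
    have lfull: "last Q = {1..n}"
    proof -
      have "card (last Q) \<le> n" using card_mono[OF finite_atLeastAtMost lsub] by simp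
      then show ?thesis using card_subset_eq[OF finite_atLeastAtMost lsub] False by simp
    qed
    have tot': "tot Q' = int (n * k)" unfolding Q' tot_app using totR tq by simp
    have sub': "\<forall>p<length Q'. Q' ! p \<subseteq> {1..n}" using nth' subR s len' by auto
    have e1: "length Q' - 2 = ?m - 1" using len' m3 by simp
    have e2a: "?m - 1 < ?m + 1" "?m - 1 \<noteq> ?m" using m3 by auto
    have e2: "Q' ! (?m - 1) = R ! (?m - 1)" using nth'[OF e2a(1)] e2a(2) by simp
    have e3: "R ! (?m - 1) = Q ! (?m - 1)" using Rnth[of "?m - 1"] i1 m3 by simp
    have full': "Q' ! (length Q' - 2) = {1..n}" using e1 e2 e3 lfull lastQ by simp
    have c3: "card (Q' ! (length Q' - 3)) + 1 \<ge> n"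
    proof -
      have a: "length Q' - 3 = ?m - 2" "?m - 2 < ?m + 1" "?m - 2 \<noteq> ?m" using len' m3 by auto
      have "Q' ! (length Q' - 3) = R ! (?m - 2)" using nth'[OF a(2)] a(1,3) by simp
      moreover have "card (R ! (?m - 2)) + 1 \<ge> card (Q ! (?m - 2))" using Rnth m3 cardj by auto
      ultimately show ?thesis using full by simp
    qed
    have c1: "card (Q' ! (length Q' - 1)) = 1" using nth'[of ?m] len' by simp
    show ?thesis unfolding Inv_def using sub' tot' len' km full' c3 c1 by simp
  qed
qed

lemma Inv_reach:
  assumes "(jenga_move n)\<^sup>*\<^sup>* (initial_config n k) Q" "k \<ge> 3"
  shows "Inv n k Q"
  using assms(1)
proof (induction rule: rtranclp_induct)
  case base then show ?case using Inv_init[OF assms(2)] .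
next
  case (step y z) then show ?case using Inv_step assms(2) by blast
qed


lemma runs_le_card: "finite S \<Longrightarrow> runs S \<le> card S"
  unfolding runs_def by (rule card_mono) auto

lemma runs_bound:
  assumes "S \<subseteq> UU n"
  shows "2 * runs S \<le> n + 1"
proof -
  have fU: "finite (UU n)" unfolding UU_def by simp
  have fS: "finite S" using finite_subset[OF assms fU] .
  let ?St = "{t \<in> S. t - 1 \<notin> S}"
  have "(\<lambda>t. t - 1) ` (?St - {0}) \<subseteq> UU n - S"
    using assms unfolding UU_def by auto
  moreover have "inj_on (\<lambda>t. t - 1) (?St - {0})" by (auto simp: inj_on_def)
  ultimately have "card (?St - {0}) \<le> card (UU n - S)"
    by (metis card_image card_mono fU finite_Diff)
  moreover have "card (UU n - S) = n - card S" using card_Diff_subset[OF fS assms] unfolding UU_def by simp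
  moreover have "card ?St \<le> card (?St - {0}) + 1"
  proof -
    have fSt: "finite ?St" using fS by simp
    show ?thesis by (cases "0 \<in> ?St") (simp_all add: card_Diff_singleton_if fSt)
  qed
  moreover have "card S \<le> n" using card_mono[OF fU assms] unfolding UU_def by simp
  moreover have "card ?St \<le> card S" using fS by (intro card_mono) auto
  ultimately show ?thesis unfolding runs_def by linarith
qed

lemma final_ineq:
  fixes r b :: "nat \<Rightarrow> int" and n k :: int
  assumes r0: "\<And>i. i < M+3 \<Longrightarrow> 0 \<le> r i" and rb: "\<And>i. i < M+3 \<Longrightarrow> r i \<le> b i" and rn: "\<And>i. i < M+3 \<Longrightarrow> 2 * r i \<le> n + 1"
    and r1: "r (M+1) = 1" and bs: "(\<Sum>i<M+3. b i) = n * k" and b1: "b (M+1) = n"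
    and b2: "n \<le> b M + b (M+2)" and n1: "n \<ge> 1"
  shows "2 * (1 - (\<Sum>i<M+3. r i) + (\<Sum>i<M+2. r i * r (i+1))) \<le> n * (n - 1) * (k - 2)"
proof -
  have tm: "2 * (r i * (r (i+1) - 1)) \<le> (n - 1) * b i" if iM: "i \<in> {..<M}" for i
  proof (cases "r (i+1) \<ge> 1")
    case True
    have "r i * (2 * (r (i+1) - 1)) \<le> b i * (n - 1)"
      by (rule mult_mono) (use rb[of i] r0[of i] rn[of "i+1"] True iM in auto)
    then show ?thesis by (simp add: algebra_simps)
  next
    case False
    then have "r (i+1) = 0" using r0[of "i+1"] iM by simp
    moreover have "0 \<le> (n - 1) * b i" using n1 rb[of i] r0[of i] iM by simp
    ultimately show ?thesis using r0[of i] iM by simp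
  qed
  have e1: "(\<Sum>i<M+3. r i) = (\<Sum>i<M. r i) + r M + r (M+1) + r (M+2)"
    by (simp add: numeral_3_eq_3)
  have e2: "(\<Sum>i<M+2. r i * r (i+1)) = (\<Sum>i<M. r i * r (i+1)) + r M * r (M+1) + r (M+1) * r (M+2)"
    by (simp add: numeral_2_eq_2)
  have e3: "(\<Sum>i<M+3. b i) = (\<Sum>i<M. b i) + b M + b (M+1) + b (M+2)"
    by (simp add: numeral_3_eq_3)
  have "1 - (\<Sum>i<M+3. r i) + (\<Sum>i<M+2. r i * r (i+1)) = (\<Sum>i<M. r i * (r (i+1) - 1))"
    unfolding e1 e2 r1 by (simp add: sum_subtractf algebra_simps)
  then have "2 * (1 - (\<Sum>i<M+3. r i) + (\<Sum>i<M+2. r i * r (i+1))) = (\<Sum>i<M. 2 * (r i * (r (i+1) - 1)))"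
    by (simp add: sum_distrib_left)
  also have "\<dots> \<le> (\<Sum>i<M. (n - 1) * b i)" by (rule sum_mono) (rule tm, assumption)
  also have "\<dots> = (n - 1) * (\<Sum>i<M. b i)" by (simp add: sum_distrib_left)
  also have "\<dots> \<le> (n - 1) * (n * (k - 2))"
  proof (rule mult_left_mono)
    show "(\<Sum>i<M. b i) \<le> n * (k - 2)" using bs e3 b1 b2 by (simp add: algebra_simps)
  qed (use n1 in simp)
  finally show ?thesis by (simp add: algebra_simps)
qed

lemma AA_full: "Q ! i = {1..n} \<Longrightarrow> AA Q i = UU n"
proof -
  assume h: "Q ! i = {1..n}"
  show ?thesis
  proof
    show "AA Q i \<subseteq> UU n" using h unfolding AA_def UU_def by auto
    show "UU n \<subseteq> AA Q i"
    proof
      fix x assume "x \<in> UU n"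
      then have "nat (x + 1) \<in> Q ! i" "x = int (nat (x + 1)) - 1" using h unfolding UU_def by auto
      then show "x \<in> AA Q i" unfolding AA_def by blast
    qed
  qed
qed

lemma AA_card: "finite (Q ! i) \<Longrightarrow> card (AA Q i) = card (Q ! i)"
  unfolding AA_def by (rule card_image) (auto simp: inj_on_def)

lemma tot_sum: "tot Q = (\<Sum>i<length Q. int (card (Q ! i)))"
  unfolding tot_def sum_list_sum_nth by (simp add: atLeast0LessThan)

theorem mainTheorem6:
  fixes n k :: nat and Q :: config
  assumes "odd n" and "n \<ge> 3" and "k \<ge> 3"
    and "jenga_like n k Q"
  shows "genus n Q \<le> real (n * (n - 1) * (k - 2)) / 2"
proof -
  have reach: "(jenga_move n)\<^sup>*\<^sup>* (initial_config n k) Q" using assms(4) unfolding jenga_like_def by simp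
  have inv: "Inv n k Q" using Inv_reach[OF reach assms(3)] .
  have sub: "\<forall>i<length Q. Q ! i \<subseteq> {1..n}" and tq: "tot Q = int (n * k)" and km: "k \<le> length Q"
    and full: "Q ! (length Q - 2) = {1..n}" and cnt: "n \<le> card (Q ! (length Q - 3)) + card (Q ! (length Q - 1))"
    using inv unfolding Inv_def by auto
  have n1: "n \<ge> 1" using assms(2) by simp
  obtain M where mM: "length Q = M + 3" using km assms(3) by (metis add.commute le_Suc_ex le_trans)
  define b where "b i = int (card (Q ! i))" for i
  have chi: "boundary_euler (config_cubes n Q) =
     2 * (\<Sum>i<length Q. rr Q i) - 2 * (\<Sum>i<length Q - 1. rr Q i * rr Q (i + 1))"
    by (rule chi_config[OF n1 sub])
  have subi: "Q ! i \<subseteq> {1..n}" if "i < M + 3" for i using sub that mM by simp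
  have fini: "finite (Q ! i)" if "i < M + 3" for i using subi[OF that] by (rule finite_subset) simp
  have ineq: "2 * (1 - (\<Sum>i<M+3. rr Q i) + (\<Sum>i<M+2. rr Q i * rr Q (i+1))) \<le> int n * (int n - 1) * (int k - 2)"
  proof (rule final_ineq[where b = b])
    show "\<And>i. i < M + 3 \<Longrightarrow> 0 \<le> rr Q i" unfolding rr_def by simp
    show "\<And>i. i < M + 3 \<Longrightarrow> rr Q i \<le> b i"
    proof -
      fix i assume i: "i < M + 3"
      have "runs (AA Q i) \<le> card (AA Q i)" using AA_fin[OF subi[OF i]] by (rule runs_le_card)
      then show "rr Q i \<le> b i" unfolding rr_def b_def AA_card[OF fini[OF i]] by simp
    qed
    show "\<And>i. i < M + 3 \<Longrightarrow> 2 * rr Q i \<le> int n + 1"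
    proof -
      fix i assume i: "i < M + 3"
      have "2 * runs (AA Q i) \<le> n + 1" using runs_bound[OF AA_sub[OF subi[OF i]]] .
      then show "2 * rr Q i \<le> int n + 1" unfolding rr_def by linarith
    qed
    show "rr Q (M + 1) = 1" using full mM AA_full[of Q "M+1" n] runs_UU[OF n1] unfolding rr_def by simp
    show "(\<Sum>i<M + 3. b i) = int n * int k" using tq unfolding tot_sum mM b_def by simp
    show "b (M + 1) = int n" using full mM unfolding b_def by simp
    show "int n \<le> b M + b (M + 2)" using cnt mM unfolding b_def by simp
    show "1 \<le> int n" using n1 by simp
  qed
  have g: "genus n Q = 1 - real_of_int (\<Sum>i<M+3. rr Q i) + real_of_int (\<Sum>i<M+2. rr Q i * rr Q (i+1))"
    unfolding genus_def chi mM by simp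
  have eqP: "real (n * (n - 1) * (k - 2)) = real_of_int (int n * (int n - 1) * (int k - 2))"
    using n1 assms(3) by (simp add: of_nat_diff)
  have "real_of_int (2 * (1 - (\<Sum>i<M+3. rr Q i) + (\<Sum>i<M+2. rr Q i * rr Q (i+1)))) \<le> real_of_int (int n * (int n - 1) * (int k - 2))"
    using ineq by (simp only: of_int_le_iff)
  then have "2 * (1 - real_of_int (\<Sum>i<M+3. rr Q i) + real_of_int (\<Sum>i<M+2. rr Q i * rr Q (i+1))) \<le> real_of_int (int n * (int n - 1) * (int k - 2))"
    by simp
  then have "2 * (1 - real_of_int (\<Sum>i<M+3. rr Q i) + real_of_int (\<Sum>i<M+2. rr Q i * rr Q (i+1))) \<le> real (n * (n - 1) * (k - 2))"
    unfolding eqP .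
  then have "1 - real_of_int (\<Sum>i<M+3. rr Q i) + real_of_int (\<Sum>i<M+2. rr Q i * rr Q (i+1)) \<le> real (n * (n - 1) * (k - 2)) / 2"
    by (simp add: field_simps)
  then show ?thesis unfolding g .
qed


end
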